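(* Let $n\ge0$ be an integer, let $\tilde\Phi_n(t)=\sum_{k=0}^\infty\alpha_k^{(n)}Q_k(t)$ for $t\in(-1,1)$, and let $L_n$ be the differential operator $$L_n[\varphi](t)=(1-t^2)\varphi''(t)-2t\varphi'(t)+(\chi_n-c^2t^2)\varphi(t).$$ Then for all $t\in(-1,1)$, $$L_n[\tilde\Phi_n](t)=-c^2\Big(\alpha_0^{(n)}t+\frac{\alpha_1^{(n)}}{3}\Big).$$
   Context: For a real number $c>0$, let $\psi_0,\psi_1,\dots$ be the prolate spheroidal wave functions of band limit $c$: the real $L^2[-1,1]$-normalized eigenfunctions of $F_c[\varphi](x)=\int_{-1}^1\varphi(t)e^{icxt}\,dt$ (eigenvalues ordered by decreasing absolute value). $\chi_0<\chi_1<\dots$ are the positive numbers such that $\psi_n$ satisfies $(1-x^2)\psi''(x)-2x\psi'(x)+(\chi_n-c^2x^2)\psi(x)=0$. Let $P_k$ be the Legendre polynomials and $\alpha_k^{(n)}=(k+\tfrac12)\int_{-1}^1\psi_n(x)P_k(x)\,dx$, so $\psi_n=\sum_k\alpha_k^{(n)}P_k$ on $[-1,1]$. The Legendre functions of the second kind are $Q_0(t)=\frac12\log\frac{1+t}{1-t}$, $Q_1(t)=\frac t2\log\frac{1+t}{1-t}-1$, and $(k+1)Q_{k+1}(t)=(2k+1)tQ_k(t)-kQ_{k-1}(t)$ for $k\ge1$. *)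

theory Defs
  imports "HOL-Analysis.Analysis"
begin

fun legP :: "nat \<Rightarrow> real \<Rightarrow> real" where
  "legP 0 t = 1"
| "legP (Suc 0) t = t"
| "legP (Suc (Suc k)) t =
     ((2 * real k + 3) * t * legP (Suc k) t - (real k + 1) * legP k t) / (real k + 2)"

fun legQ :: "nat \<Rightarrow> real \<Rightarrow> real" where
  "legQ 0 t = ln ((1 + t) / (1 - t)) / 2"
| "legQ (Suc 0) t = t / 2 * ln ((1 + t) / (1 - t)) - 1"
| "legQ (Suc (Suc k)) t =
     ((2 * real k + 3) * t * legQ (Suc k) t - (real k + 1) * legQ k t) / (real k + 2)"

text \<open>The system (psi_n, chi_n) of prolate spheroidal wave functions of band limit c:
  real, L2[-1,1]-orthonormal eigenfunctions of F_c with eigenvalues ordered by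
  nonincreasing absolute value, together with the increasing positive numbers chi_n
  such that psi_n solves the prolate ODE on (-1,1).\<close>
definition pswf_system :: "real \<Rightarrow> (nat \<Rightarrow> real \<Rightarrow> real) \<Rightarrow> (nat \<Rightarrow> real) \<Rightarrow> bool" where
  "pswf_system c psi chi \<longleftrightarrow>
     (\<exists>lam :: nat \<Rightarrow> complex.
        (\<forall>n. continuous_on {-1..1} (psi n)) \<and>
        (\<forall>n m. integral {-1..1} (\<lambda>x. psi n x * psi m x) = (if n = m then 1 else 0)) \<and>
        (\<forall>n. \<forall>x\<in>{-1..1}.
            integral {-1..1} (\<lambda>t. complex_of_real (psi n t) * cis (c * x * t))
              = lam n * complex_of_real (psi n x)) \<and>
        (\<forall>n. norm (lam (Suc n)) \<le> norm (lam n)) \<and>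
        (\<forall>n. 0 < chi n \<and> chi n < chi (Suc n)) \<and>
        (\<forall>n. \<exists>d1 d2. \<forall>x\<in>{-1<..<1}.
            (psi n has_real_derivative d1 x) (at x) \<and>
            (d1 has_real_derivative d2 x) (at x) \<and>
            (1 - x\<^sup>2) * d2 x - 2 * x * d1 x + (chi n - c\<^sup>2 * x\<^sup>2) * psi n x = 0))"

definition alpha :: "(nat \<Rightarrow> real \<Rightarrow> real) \<Rightarrow> nat \<Rightarrow> nat \<Rightarrow> real" where
  "alpha psi n k = (real k + 1/2) * integral {-1..1} (\<lambda>x. psi n x * legP k x)"

end

theory Submission
  imports Defs
begin


lemma legB_step:
  fixes t K f0 f1 f2 f3 d0 d1 d2 :: real
  assumes r1: "(K+2)*f2 = (2*K+3)*t*f1 - (K+1)*f0"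
      and r2: "(K+3)*f3 = (2*K+5)*t*f2 - (K+2)*f1"
      and rd: "(K+2)*d2 = (2*K+3)*(f1 + t*d1) - (K+1)*d0"
      and b0: "(1-t^2)*d0 = (K+1)*(t*f0 - f1)"
      and b1: "(1-t^2)*d1 = (K+2)*(t*f1 - f2)"
      and K: "K \<ge> 0"
  shows "(1-t^2)*d2 = (K+3)*(t*f2 - f3)"
proof -
  have "(K+2)*((1-t^2)*d2) = (K+2)*((K+3)*(t*f2 - f3))"
    using r1 r2 rd b0 b1 by algebra
  then show ?thesis using K by simp
qed

lemma legODE_step:
  fixes t K f0 f1 f2 d0 d1 d2 e0 e1 e2 :: real
  assumes r1: "(K+2)*f2 = (2*K+3)*t*f1 - (K+1)*f0"
      and rd: "(K+2)*d2 = (2*K+3)*(f1 + t*d1) - (K+1)*d0"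
      and re: "(K+2)*e2 = (2*K+3)*(2*d1 + t*e1) - (K+1)*e0"
      and b1: "(1-t^2)*d1 = (K+2)*(t*f1 - f2)"
      and o0: "(1-t^2)*e0 - 2*t*d0 + K*(K+1)*f0 = 0"
      and o1: "(1-t^2)*e1 - 2*t*d1 + (K+1)*(K+2)*f1 = 0"
      and K: "K \<ge> 0"
  shows "(1-t^2)*e2 - 2*t*d2 + (K+2)*(K+3)*f2 = 0"
proof -
  have "(K+2)*((1-t^2)*e2 - 2*t*d2 + (K+2)*(K+3)*f2) = 0"
    using r1 rd re b1 o0 o1 by algebra
  then show ?thesis using K by simp
qed



lemma leg_B_all:
  fixes f d :: "nat \<Rightarrow> real" and t :: real
  assumes rf: "\<And>k. (real k+2)*f (Suc (Suc k)) = (2*real k+3)*t*f (Suc k) - (real k+1)*f k"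
      and rd: "\<And>k. (real k+2)*d (Suc (Suc k)) = (2*real k+3)*(f (Suc k) + t*d (Suc k)) - (real k+1)*d k"
      and b0: "(1-t^2)*d 0 = t*f 0 - f 1"
      and b1: "(1-t^2)*d 1 = 2*(t*f 1 - f 2)"
  shows "(1-t^2)*d k = (real k+1)*(t*f k - f (Suc k))"
proof (induction k rule: nat_less_induct)
  case (1 k)
  show ?case
  proof (cases k)
    case 0 then show ?thesis using b0 by simp
  next
    case (Suc m) note m = Suc
    show ?thesis
    proof (cases m)
      case 0 then show ?thesis using b1 m by (simp add: numeral_2_eq_2)
    next
      case (Suc j)
      have k: "k = Suc (Suc j)" using m Suc by simp
      have i0: "(1-t^2)*d j = (real j+1)*(t*f j - f (Suc j))" using 1 k by auto
      have i1: "(1-t^2)*d (Suc j) = (real j+2)*(t*f (Suc j) - f (Suc (Suc j)))"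
        using 1 k by (auto simp: algebra_simps)
      have r2: "(real j+3)*f (Suc (Suc (Suc j))) = (2*real j+5)*t*f (Suc (Suc j)) - (real j+2)*f (Suc j)"
        using rf[of "Suc j"] by (simp add: algebra_simps)
      have "(1-t^2)*d (Suc (Suc j)) = (real j+3)*(t*f (Suc (Suc j)) - f (Suc (Suc (Suc j))))"
        by (rule legB_step[OF rf[of j] r2 rd[of j] i0 i1]) simp
      then show ?thesis using k by (simp add: algebra_simps)
    qed
  qed
qed

lemma leg_ODE_all:
  fixes f d e :: "nat \<Rightarrow> real" and t :: real
  assumes rf: "\<And>k. (real k+2)*f (Suc (Suc k)) = (2*real k+3)*t*f (Suc k) - (real k+1)*f k"
      and rd: "\<And>k. (real k+2)*d (Suc (Suc k)) = (2*real k+3)*(f (Suc k) + t*d (Suc k)) - (real k+1)*d k"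
      and re: "\<And>k. (real k+2)*e (Suc (Suc k)) = (2*real k+3)*(2*d (Suc k) + t*e (Suc k)) - (real k+1)*e k"
      and b0: "(1-t^2)*d 0 = t*f 0 - f 1"
      and b1: "(1-t^2)*d 1 = 2*(t*f 1 - f 2)"
      and o0: "(1-t^2)*e 0 - 2*t*d 0 = 0"
      and o1: "(1-t^2)*e 1 - 2*t*d 1 + 2*f 1 = 0"
  shows "(1-t^2)*e k - 2*t*d k + real k*(real k+1)*f k = 0"
proof (induction k rule: nat_less_induct)
  case (1 k)
  show ?case
  proof (cases k)
    case 0 then show ?thesis using o0 by simp
  next
    case (Suc m) note m = Suc
    show ?thesis
    proof (cases m)
      case 0 then show ?thesis using o1 m by simp
    next
      case (Suc j)
      have k: "k = Suc (Suc j)" using m Suc by simp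
      have i0: "(1-t^2)*e j - 2*t*d j + real j*(real j+1)*f j = 0" using 1 k by auto
      have i1: "(1-t^2)*e (Suc j) - 2*t*d (Suc j) + (real j+1)*(real j+2)*f (Suc j) = 0"
        using 1 k by (auto simp: algebra_simps)
      have b: "(1-t^2)*d (Suc j) = (real j+2)*(t*f (Suc j) - f (Suc (Suc j)))"
        using leg_B_all[OF rf rd b0 b1, of "Suc j"] by (simp add: algebra_simps)
      have "(1-t^2)*e (Suc (Suc j)) - 2*t*d (Suc (Suc j)) + (real j+2)*(real j+3)*f (Suc (Suc j)) = 0"
        by (rule legODE_step[OF rf[of j] rd[of j] re[of j] b i0 i1]) simp
      then show ?thesis using k by (simp add: algebra_simps)
    qed
  qed
qed



fun dP :: "nat \<Rightarrow> real \<Rightarrow> real" where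
  "dP 0 t = 0"
| "dP (Suc 0) t = 1"
| "dP (Suc (Suc k)) t = ((2 * real k + 3) * (legP (Suc k) t + t * dP (Suc k) t) - (real k + 1) * dP k t) / (real k + 2)"

fun ddP :: "nat \<Rightarrow> real \<Rightarrow> real" where
  "ddP 0 t = 0"
| "ddP (Suc 0) t = 0"
| "ddP (Suc (Suc k)) t = ((2 * real k + 3) * (2 * dP (Suc k) t + t * ddP (Suc k) t) - (real k + 1) * ddP k t) / (real k + 2)"

fun dQ :: "nat \<Rightarrow> real \<Rightarrow> real" where
  "dQ 0 t = 1 / (1 - t^2)"
| "dQ (Suc 0) t = legQ 0 t + t / (1 - t^2)"
| "dQ (Suc (Suc k)) t = ((2 * real k + 3) * (legQ (Suc k) t + t * dQ (Suc k) t) - (real k + 1) * dQ k t) / (real k + 2)"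

fun ddQ :: "nat \<Rightarrow> real \<Rightarrow> real" where
  "ddQ 0 t = 2 * t / (1 - t^2)^2"
| "ddQ (Suc 0) t = 1 / (1 - t^2) + (1 + t^2) / (1 - t^2)^2"
| "ddQ (Suc (Suc k)) t = ((2 * real k + 3) * (2 * dQ (Suc k) t + t * ddQ (Suc k) t) - (real k + 1) * ddQ k t) / (real k + 2)"

lemma rec_form:
  fixes a b :: real assumes "a = b / (real k + 2)" shows "(real k + 2) * a = b"
  using assms by (simp add: field_simps)

lemma legP_rec: "(real k+2)*legP (Suc (Suc k)) t = (2*real k+3)*t*legP (Suc k) t - (real k+1)*legP k t"
  by (rule rec_form) simp
lemma legQ_rec: "(real k+2)*legQ (Suc (Suc k)) t = (2*real k+3)*t*legQ (Suc k) t - (real k+1)*legQ k t"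
  by (rule rec_form) simp
lemma dP_rec: "(real k+2)*dP (Suc (Suc k)) t = (2*real k+3)*(legP (Suc k) t + t*dP (Suc k) t) - (real k+1)*dP k t"
  by (rule rec_form) simp
lemma dQ_rec: "(real k+2)*dQ (Suc (Suc k)) t = (2*real k+3)*(legQ (Suc k) t + t*dQ (Suc k) t) - (real k+1)*dQ k t"
  by (rule rec_form) simp
lemma ddP_rec: "(real k+2)*ddP (Suc (Suc k)) t = (2*real k+3)*(2*dP (Suc k) t + t*ddP (Suc k) t) - (real k+1)*ddP k t"
  by (rule rec_form) simp
lemma ddQ_rec: "(real k+2)*ddQ (Suc (Suc k)) t = (2*real k+3)*(2*dQ (Suc k) t + t*ddQ (Suc k) t) - (real k+1)*ddQ k t"
  by (rule rec_form) simp

lemma legP_ODE: "(1-t^2)*ddP k t - 2*t*dP k t + real k*(real k+1)*legP k t = 0"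
  by (rule leg_ODE_all[where f="\<lambda>k. legP k t" and d="\<lambda>k. dP k t" and e="\<lambda>k. ddP k t",
        OF legP_rec dP_rec ddP_rec]) (simp_all add: numeral_2_eq_2 power2_eq_square field_simps)

lemma legQ_ODE:
  assumes "t \<in> {-1<..<1}"
  shows "(1-t^2)*ddQ k t - 2*t*dQ k t + real k*(real k+1)*legQ k t = 0"
proof -
  have "t^2 < 1" using assms by (simp add: abs_square_less_1 abs_less_iff)
  then have nz: "1 - t^2 \<noteq> 0" by simp
  show ?thesis
  proof (rule leg_ODE_all[where f="\<lambda>k. legQ k t" and d="\<lambda>k. dQ k t" and e="\<lambda>k. ddQ k t",
        OF legQ_rec dQ_rec ddQ_rec])
    show "(1 - t\<^sup>2) * dQ 0 t = t * legQ 0 t - legQ 1 t" using nz by simp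
    show "(1 - t\<^sup>2) * dQ 1 t = 2 * (t * legQ 1 t - legQ 2 t)"
      using nz by (simp add: numeral_2_eq_2 field_simps)
    have "(1 - t\<^sup>2) * ddQ 0 t = 2 * t / (1 - t^2)"
      using nz by (simp add: power2_eq_square[of "1 - t\<^sup>2"])
    then show "(1 - t\<^sup>2) * ddQ 0 t - 2 * t * dQ 0 t = 0" by simp
    have e1: "(1 - t\<^sup>2) * ddQ 1 t = 1 + (1 + t^2) / (1 - t^2)"
    proof -
      have "\<And>u a::real. u \<noteq> 0 \<Longrightarrow> u * (1/u + a/u^2) = 1 + a/u"
        by (simp add: power2_eq_square field_simps)
      from this[OF nz] show ?thesis by simp
    qed
    have e2: "(1 + t^2) / (1 - t^2) = 1 + 2 * t^2 / (1 - t^2)"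
      using nz by (simp add: field_simps)
    show "(1 - t\<^sup>2) * ddQ 1 t - 2 * t * dQ 1 t + 2 * legQ 1 t = 0"
      unfolding e1 e2 by (simp add: algebra_simps power2_eq_square)
  qed
qed



lemma two_step_induct:
  assumes "P 0" "P (Suc 0)" "\<And>k. P k \<Longrightarrow> P (Suc k) \<Longrightarrow> P (Suc (Suc k))"
  shows "P n"
proof -
  have "P n \<and> P (Suc n)" by (induction n) (use assms in auto)
  then show ?thesis by simp
qed

lemma rec_deriv:
  fixes f0 f1 d0 d1 :: "real \<Rightarrow> real"
  assumes "(f0 has_real_derivative d0 t) (at t)" "(f1 has_real_derivative d1 t) (at t)"
  shows "((\<lambda>t. ((2 * real k + 3) * t * f1 t - (real k + 1) * f0 t) / (real k + 2)) has_real_derivative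
          ((2 * real k + 3) * (f1 t + t * d1 t) - (real k + 1) * d0 t) / (real k + 2)) (at t)"
proof -
  have "((\<lambda>t. (2 * real k + 3) * t * f1 t - (real k + 1) * f0 t) has_real_derivative
          ((2 * real k + 3) * (f1 t + t * d1 t) - (real k + 1) * d0 t)) (at t)"
    using assms by (auto intro!: derivative_eq_intros simp: algebra_simps)
  then show ?thesis by (rule DERIV_cdivide)
qed

lemma rec_deriv2:
  fixes d0 d1 e0 e1 g1 :: "real \<Rightarrow> real"
  assumes "(d0 has_real_derivative e0 t) (at t)" "(d1 has_real_derivative e1 t) (at t)"
     "(g1 has_real_derivative d1 t) (at t)"
  shows "((\<lambda>t. ((2 * real k + 3) * (g1 t + t * d1 t) - (real k + 1) * d0 t) / (real k + 2)) has_real_derivative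
          ((2 * real k + 3) * (2 * d1 t + t * e1 t) - (real k + 1) * e0 t) / (real k + 2)) (at t)"
proof -
  have "((\<lambda>t. (2 * real k + 3) * (g1 t + t * d1 t) - (real k + 1) * d0 t) has_real_derivative
          ((2 * real k + 3) * (2 * d1 t + t * e1 t) - (real k + 1) * e0 t)) (at t)"
    using assms by (auto intro!: derivative_eq_intros simp: algebra_simps)
  then show ?thesis by (rule DERIV_cdivide)
qed

lemma deriv_legP:
  "(legP k has_real_derivative dP k t) (at t) \<and> (dP k has_real_derivative ddP k t) (at t)"
proof (induction k arbitrary: t rule: two_step_induct)
  case 1 then show ?case by (auto intro!: derivative_eq_intros)
next
  case 2 then show ?case by (auto intro!: derivative_eq_intros)
next
  case (3 k)
  have e1: "legP (Suc (Suc k)) = (\<lambda>t. ((2 * real k + 3) * t * legP (Suc k) t - (real k + 1) * legP k t) / (real k + 2))"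
    by (rule ext) simp
  have e2: "dP (Suc (Suc k)) = (\<lambda>t. ((2 * real k + 3) * (legP (Suc k) t + t * dP (Suc k) t) - (real k + 1) * dP k t) / (real k + 2))"
    by (rule ext) simp
  show ?case unfolding e1 e2 using 3[of t]
    by (auto intro!: rec_deriv rec_deriv2)
qed

lemma sq_lt1: "t \<in> {-1<..<1::real} \<Longrightarrow> t^2 < 1"
  by (simp add: abs_square_less_1 abs_less_iff)

lemma deriv_legQ01:
  assumes t: "t \<in> {-1<..<1::real}"
  shows "(legQ 0 has_real_derivative dQ 0 t) (at t)" "(legQ (Suc 0) has_real_derivative dQ (Suc 0) t) (at t)"
    "(dQ 0 has_real_derivative ddQ 0 t) (at t)" "(dQ (Suc 0) has_real_derivative ddQ (Suc 0) t) (at t)"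
proof -
  have t1: "1 - t > 0" "1 + t > 0" using t by auto
  have nz: "1 - t^2 \<noteq> 0" using sq_lt1[OF t] by simp
  have nz': "1 - t*t \<noteq> 0" "1 - t \<noteq> 0" "1 + t \<noteq> 0" using nz t1 by (auto simp: power2_eq_square)
  have e0: "legQ 0 = (\<lambda>t. ln ((1 + t) / (1 - t)) / 2)" by (rule ext) simp
  have d0: "(legQ 0 has_real_derivative dQ 0 t) (at t)"
    unfolding e0 using t1 nz'
    apply (auto intro!: derivative_eq_intros simp: power2_eq_square)
    apply (simp add: divide_simps)
    apply (simp add: algebra_simps)
    done
  then show "(legQ 0 has_real_derivative dQ 0 t) (at t)" .
  have e1: "legQ (Suc 0) = (\<lambda>t. t / 2 * ln ((1 + t) / (1 - t)) - 1)" by (rule ext) simp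
  show "(legQ (Suc 0) has_real_derivative dQ (Suc 0) t) (at t)"
    unfolding e1 using t1 nz'
    apply (auto intro!: derivative_eq_intros simp: power2_eq_square)
    apply (simp add: divide_simps)
    apply (simp add: algebra_simps)
    done
  have e2: "dQ 0 = (\<lambda>t. 1 / (1 - t^2))" by (rule ext) simp
  show "(dQ 0 has_real_derivative ddQ 0 t) (at t)"
    unfolding e2 using nz'
    apply (auto intro!: derivative_eq_intros simp: power2_eq_square)
    done
  have e3: "dQ (Suc 0) = (\<lambda>t. legQ 0 t + t / (1 - t^2))" by (rule ext) simp
  have d3: "((\<lambda>t. t / (1 - t^2)) has_real_derivative (1 + t^2) / (1 - t^2)^2) (at t)"
    using nz'
    apply (auto intro!: derivative_eq_intros simp: power2_eq_square)
    done
  have "((\<lambda>t. legQ 0 t + t / (1 - t^2)) has_real_derivative dQ 0 t + (1 + t^2) / (1 - t^2)^2) (at t)"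
    by (rule DERIV_add[OF d0 d3])
  then show "(dQ (Suc 0) has_real_derivative ddQ (Suc 0) t) (at t)" unfolding e3 by simp
qed

lemma deriv_legQ:
  assumes t: "t \<in> {-1<..<1::real}"
  shows "(legQ k has_real_derivative dQ k t) (at t) \<and> (dQ k has_real_derivative ddQ k t) (at t)"
  using t
proof (induction k arbitrary: t rule: two_step_induct)
  case 1 then show ?case using deriv_legQ01[OF 1] by blast
next
  case 2 then show ?case using deriv_legQ01[OF 2] by blast
next
  case (3 k)
  have e1: "legQ (Suc (Suc k)) = (\<lambda>t. ((2 * real k + 3) * t * legQ (Suc k) t - (real k + 1) * legQ k t) / (real k + 2))"
    by (rule ext) simp
  have e2: "dQ (Suc (Suc k)) = (\<lambda>t. ((2 * real k + 3) * (legQ (Suc k) t + t * dQ (Suc k) t) - (real k + 1) * dQ k t) / (real k + 2))"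
    by (rule ext) simp
  show ?case unfolding e1 e2 using 3
    by (auto intro!: rec_deriv rec_deriv2)
qed



lemma rec_bound:
  fixes f d e :: "nat \<Rightarrow> real" and t D :: real
  assumes rf: "\<And>k. (real k+2)*f (Suc (Suc k)) = (2*real k+3)*t*f (Suc k) - (real k+1)*f k"
      and rd: "\<And>k. (real k+2)*d (Suc (Suc k)) = (2*real k+3)*(f (Suc k) + t*d (Suc k)) - (real k+1)*d k"
      and re: "\<And>k. (real k+2)*e (Suc (Suc k)) = (2*real k+3)*(2*d (Suc k) + t*e (Suc k)) - (real k+1)*e k"
      and t: "\<bar>t\<bar> \<le> 1"
      and b: "\<And>i. i \<le> 1 \<Longrightarrow> \<bar>f i\<bar> \<le> D \<and> \<bar>d i\<bar> \<le> D \<and> \<bar>e i\<bar> \<le> D"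
  shows "\<bar>f k\<bar> \<le> D*7^k \<and> \<bar>d k\<bar> \<le> D*7^k \<and> \<bar>e k\<bar> \<le> D*7^k"
proof (induction k rule: two_step_induct)
  case 1 then show ?case using b[of 0] by simp
next
  case 2 then show ?case using b[of 1] by (auto intro: order_trans)
next
  case (3 k)
  define M where "M = D*7^k"
  have D0: "D \<ge> 0" using b[of 0] by auto
  have M0: "M \<ge> 0" using D0 by (simp add: M_def)
  have h0: "\<bar>f k\<bar> \<le> M" "\<bar>d k\<bar> \<le> M" "\<bar>e k\<bar> \<le> M" using 3 by (auto simp: M_def)
  have h1: "\<bar>f (Suc k)\<bar> \<le> 7*M" "\<bar>d (Suc k)\<bar> \<le> 7*M" "\<bar>e (Suc k)\<bar> \<le> 7*M"
    using 3 by (auto simp: M_def algebra_simps)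
  have kp: "real k + 2 > 0" by simp
  have tf: "\<bar>t * x\<bar> \<le> \<bar>x\<bar>" for x using t by (simp add: abs_mult mult_left_le_one_le)
  have "(real k+2)*\<bar>f (Suc (Suc k))\<bar> \<le> (2*real k+3)*(7*M) + (real k+1)*M"
  proof -
    have "(real k+2)*\<bar>f (Suc (Suc k))\<bar> = \<bar>(2*real k+3)*(t*f (Suc k)) - (real k+1)*f k\<bar>"
      by (subst abs_of_pos[OF kp, symmetric], subst abs_mult[symmetric], subst rf[of k]) (simp add: algebra_simps)
    also have "\<dots> \<le> (2*real k+3)*\<bar>t*f (Suc k)\<bar> + (real k+1)*\<bar>f k\<bar>"
      by (simp add: abs_mult abs_triangle_ineq4 order_trans[OF abs_triangle_ineq4])
    also have "\<dots> \<le> (2*real k+3)*(7*M) + (real k+1)*M"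
      using tf[of "f (Suc k)"] h0 h1 by (intro add_mono mult_left_mono) auto
    finally show ?thesis .
  qed
  also have "\<dots> \<le> (real k+2)*(49*M)" using M0 by (simp add: algebra_simps)
  finally have F: "\<bar>f (Suc (Suc k))\<bar> \<le> 49*M" using kp by simp
  have "(real k+2)*\<bar>d (Suc (Suc k))\<bar> \<le> (2*real k+3)*(7*M + 7*M) + (real k+1)*M"
  proof -
    have "(real k+2)*\<bar>d (Suc (Suc k))\<bar> = \<bar>(2*real k+3)*(f (Suc k) + t*d (Suc k)) - (real k+1)*d k\<bar>"
      by (subst abs_of_pos[OF kp, symmetric], subst abs_mult[symmetric], subst rd[of k]) (simp add: algebra_simps)
    also have "\<dots> \<le> (2*real k+3)*\<bar>f (Suc k) + t*d (Suc k)\<bar> + (real k+1)*\<bar>d k\<bar>"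
      by (simp add: abs_mult order_trans[OF abs_triangle_ineq4])
    also have "\<dots> \<le> (2*real k+3)*(7*M + 7*M) + (real k+1)*M"
      using tf[of "d (Suc k)"] h0 h1 abs_triangle_ineq[of "f (Suc k)" "t*d (Suc k)"]
      by (intro add_mono mult_left_mono) auto
    finally show ?thesis .
  qed
  also have "\<dots> \<le> (real k+2)*(49*M)" using M0 by (simp add: algebra_simps)
  finally have Dd: "\<bar>d (Suc (Suc k))\<bar> \<le> 49*M" using kp by simp
  have "(real k+2)*\<bar>e (Suc (Suc k))\<bar> \<le> (2*real k+3)*(2*(7*M) + 7*M) + (real k+1)*M"
  proof -
    have "(real k+2)*\<bar>e (Suc (Suc k))\<bar> = \<bar>(2*real k+3)*(2*d (Suc k) + t*e (Suc k)) - (real k+1)*e k\<bar>"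
      by (subst abs_of_pos[OF kp, symmetric], subst abs_mult[symmetric], subst re[of k]) (simp add: algebra_simps)
    also have "\<dots> \<le> (2*real k+3)*\<bar>2*d (Suc k) + t*e (Suc k)\<bar> + (real k+1)*\<bar>e k\<bar>"
      by (simp add: abs_mult order_trans[OF abs_triangle_ineq4])
    also have "\<dots> \<le> (2*real k+3)*(2*(7*M) + 7*M) + (real k+1)*M"
      using tf[of "e (Suc k)"] h0 h1 abs_triangle_ineq[of "2*d (Suc k)" "t*e (Suc k)"]
      by (intro add_mono mult_left_mono) (auto simp: abs_mult)
    finally show ?thesis .
  qed
  also have "\<dots> \<le> (real k+2)*(49*M)" using M0 by (simp add: algebra_simps)
  finally have E: "\<bar>e (Suc (Suc k))\<bar> \<le> 49*M" using kp by simp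
  show ?case using F Dd E by (simp add: M_def algebra_simps)
qed

lemma legP_bound:
  assumes "\<bar>x\<bar> \<le> 1" shows "\<bar>legP k x\<bar> \<le> 7^k"
  using rec_bound[where f="\<lambda>k. legP k x" and d="\<lambda>k. dP k x" and e="\<lambda>k. ddP k x" and D=1,
      OF legP_rec dP_rec ddP_rec assms] assms
  by (force simp: le_Suc_eq)



lemma cont_bound:
  fixes g :: "real \<Rightarrow> real"
  assumes "continuous_on {a..b} g"
  shows "\<exists>D. \<forall>x\<in>{a..b}. \<bar>g x\<bar> \<le> D"
proof -
  have "bounded (g ` {a..b})" by (rule compact_imp_bounded[OF compact_continuous_image[OF assms compact_Icc]])
  then obtain D where "\<forall>y\<in>g`{a..b}. norm y \<le> D" by (auto simp: bounded_iff)
  then show ?thesis by auto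
qed

lemma legQ_bound:
  assumes r: "0 \<le> r" "r < 1"
  shows "\<exists>D. \<forall>k. \<forall>t\<in>{-r..r}. \<bar>legQ k t\<bar> \<le> D*7^k \<and> \<bar>dQ k t\<bar> \<le> D*7^k \<and> \<bar>ddQ k t\<bar> \<le> D*7^k"
proof -
  have sub: "{-r..r} \<subseteq> {-1<..<1}" using r by auto
  have cQ: "continuous_on {-r..r} (legQ k)" "continuous_on {-r..r} (dQ k)" for k
  proof -
    have h: "x \<in> {-r..r} \<Longrightarrow> (legQ k has_real_derivative dQ k x) (at x) \<and> (dQ k has_real_derivative ddQ k x) (at x)" for x
      using deriv_legQ[of x k] sub by blast
    show "continuous_on {-r..r} (legQ k)" "continuous_on {-r..r} (dQ k)"
      by (rule continuous_at_imp_continuous_on, use h in \<open>blast intro: DERIV_isCont\<close>)+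
  qed
  have nz: "1 - t^2 \<noteq> 0" if "t \<in> {-r..r}" for t using sq_lt1[of t] sub that by auto
  have e0: "ddQ 0 = (\<lambda>t. 2 * t / (1 - t^2)^2)" "ddQ (Suc 0) = (\<lambda>t. 1 / (1 - t^2) + (1 + t^2) / (1 - t^2)^2)"
    by (auto intro!: ext)
  have c0: "continuous_on {-r..r} (ddQ 0)" "continuous_on {-r..r} (ddQ (Suc 0))"
    unfolding e0 using nz by (auto intro!: continuous_intros)
  obtain D1 where D1: "\<forall>x\<in>{-r..r}. \<bar>legQ 0 x\<bar> \<le> D1" using cont_bound[OF cQ(1)] by blast
  obtain D2 where D2: "\<forall>x\<in>{-r..r}. \<bar>legQ (Suc 0) x\<bar> \<le> D2" using cont_bound[OF cQ(1)] by blast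
  obtain D3 where D3: "\<forall>x\<in>{-r..r}. \<bar>dQ 0 x\<bar> \<le> D3" using cont_bound[OF cQ(2)] by blast
  obtain D4 where D4: "\<forall>x\<in>{-r..r}. \<bar>dQ (Suc 0) x\<bar> \<le> D4" using cont_bound[OF cQ(2)] by blast
  obtain D5 where D5: "\<forall>x\<in>{-r..r}. \<bar>ddQ 0 x\<bar> \<le> D5" using cont_bound[OF c0(1)] by blast
  obtain D6 where D6: "\<forall>x\<in>{-r..r}. \<bar>ddQ (Suc 0) x\<bar> \<le> D6" using cont_bound[OF c0(2)] by blast
  define D where "D = Max {D1,D2,D3,D4,D5,D6}"
  have Dge: "D1 \<le> D" "D2 \<le> D" "D3 \<le> D" "D4 \<le> D" "D5 \<le> D" "D6 \<le> D" by (auto simp: D_def)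
  show ?thesis
  proof (intro exI allI ballI)
    fix k t assume t: "t \<in> {-r..r}"
    have ta: "\<bar>t\<bar> \<le> 1" using t r by auto
    show "\<bar>legQ k t\<bar> \<le> D*7^k \<and> \<bar>dQ k t\<bar> \<le> D*7^k \<and> \<bar>ddQ k t\<bar> \<le> D*7^k"
    proof (rule rec_bound[where f="\<lambda>k. legQ k t" and d="\<lambda>k. dQ k t" and e="\<lambda>k. ddQ k t",
      OF legQ_rec dQ_rec ddQ_rec ta])
      fix i :: nat assume "i \<le> 1"
      then have "i = 0 \<or> i = Suc 0" by auto
      then show "\<bar>legQ i t\<bar> \<le> D \<and> \<bar>dQ i t\<bar> \<le> D \<and> \<bar>ddQ i t\<bar> \<le> D"
        using D1 D2 D3 D4 D5 D6 Dge t by (meson order_trans)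
    qed
  qed
qed



lemma endpoint_right:
  fixes f d1 hd :: "real \<Rightarrow> real" and B M :: real
  assumes bnd: "\<And>x. x\<in>{-1<..<1} \<Longrightarrow> \<bar>f x\<bar> \<le> B"
    and df: "\<And>x. x\<in>{-1<..<1} \<Longrightarrow> (f has_real_derivative d1 x) (at x)"
    and dh: "\<And>x. x\<in>{-1<..<1} \<Longrightarrow> ((\<lambda>y. (1-y^2)*d1 y) has_real_derivative hd x) (at x)"
    and hb: "\<And>x. x\<in>{-1<..<1} \<Longrightarrow> \<bar>hd x\<bar> \<le> M"
  shows "((\<lambda>y. (1-y^2)*d1 y) \<longlongrightarrow> 0) (at_left 1)"
proof -
  define h where "h = (\<lambda>y::real. (1-y^2)*d1 y)"
  have M0: "M \<ge> 0" using hb[of 0] by auto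
  have B0: "B \<ge> 0" using bnd[of 0] by auto
  have lip: "\<bar>h y - h x\<bar> \<le> M*(y-x)" if "x \<in> {-1<..<1}" "y \<in> {-1<..<1}" "x \<le> y" for x y
  proof (cases "x = y")
    case True then show ?thesis by simp
  next
    case False
    then have "x < y" using that by simp
    from MVT2[OF this, of h hd] that dh obtain z where z: "x < z" "z < y" "h y - h x = (y - x) * hd z"
      unfolding h_def by force
    have "\<bar>hd z\<bar> \<le> M" using hb[of z] z that by auto
    then show ?thesis using z \<open>x < y\<close> by (simp add: abs_mult mult_left_mono)
  qed
  have "\<forall>e>0. \<exists>a<1. \<forall>y\<in>{a<..<1}. \<bar>h y\<bar> < e"
  proof (intro allI impI)
    fix e :: real assume e: "e > 0"
    define a where "a = max 0 (1 - e/(2*(M+1)))"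
    have a: "0 \<le> a" "a < 1" using e M0 by (auto simp: a_def)
    show "\<exists>a<1. \<forall>y\<in>{a<..<1}. \<bar>h y\<bar> < e"
    proof (rule ccontr)
      assume "\<not> ?thesis"
      then obtain x where x: "x \<in> {a<..<1}" "\<bar>h x\<bar> \<ge> e" using a by force
      have xin: "x \<in> {-1<..<1}" using x a by auto
      define s :: real where "s = (if h x \<ge> 0 then 1 else -1)"
      have s1: "\<bar>s\<bar> = 1" by (simp add: s_def)
      have shx: "s * h x = \<bar>h x\<bar>" by (simp add: s_def)
      have ea: "M * (1 - a) \<le> e/2"
      proof -
        have "1 - a \<le> e/(2*(M+1))" by (simp add: a_def)
        then have "M*(1-a) \<le> M*(e/(2*(M+1)))" using M0 by (rule mult_left_mono)
        also have "\<dots> \<le> e/2" using M0 e by (simp add: field_simps)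
        finally show ?thesis .
      qed
      have shy: "s * h y \<ge> e/2" if y: "y \<in> {x..<1}" for y
      proof -
        have yin: "y \<in> {-1<..<1}" using y xin by auto
        have "\<bar>h y - h x\<bar> \<le> M*(y-x)" using lip[OF xin yin] y by auto
        also have "\<dots> \<le> M*(1-a)" using M0 y x by (intro mult_left_mono) auto
        finally have "\<bar>h y - h x\<bar> \<le> e/2" using ea by linarith
        moreover have "s*h y = s*h x + s*(h y - h x)" by (simp add: algebra_simps)
        moreover have "\<bar>s*(h y - h x)\<bar> = \<bar>h y - h x\<bar>" using s1 by (simp add: abs_mult)
        ultimately show ?thesis using shx x by linarith
      qed
      define K where "K = e/4"
      have K0: "K > 0" using e by (simp add: K_def)
      have sd: "s * d1 y \<ge> K / (1 - y)" if y: "y \<in> {x..<1}" for y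
      proof -
        have y0: "y > 0" "y < 1" using y x a by auto
        have p: "1 - y^2 = (1-y)*(1+y)" by (simp add: power2_eq_square algebra_simps)
        have pos: "1 - y^2 > 0" using y0 unfolding p by simp
        have "s * h y = (1 - y^2) * (s * d1 y)" by (simp add: h_def)
        with shy[OF y] have "(1 - y^2) * (s * d1 y) \<ge> e/2" by simp
        then have "s * d1 y \<ge> (e/2) / (1 - y^2)" using pos by (simp add: field_simps)
        moreover have "(e/2)/(1-y^2) \<ge> K / (1 - y)"
        proof -
          have "(e/2)/(1-y^2) = (e/2)/((1-y)*(1+y))" by (simp add: p)
          also have "\<dots> \<ge> (e/2)/((1-y)*2)" using y0 e
            by (intro divide_left_mono mult_left_mono mult_pos_pos) auto
          also have "(e/2)/((1-y)*2) = K/(1-y)" by (simp add: K_def field_simps)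
          finally show ?thesis .
        qed
        ultimately show ?thesis by linarith
      qed
      define u where "u = (\<lambda>y. s * f y + K * ln (1 - y))"
      have umono: "u y \<ge> u x" if y: "y \<in> {x<..<1}" for y
      proof -
        have der: "(u has_real_derivative (s * d1 z - K / (1 - z))) (at z)" if "x \<le> z" "z \<le> y" for z
        proof -
          have zin: "z \<in> {-1<..<1}" using that y xin by auto
          show ?thesis unfolding u_def using df[OF zin] zin
            by (auto intro!: derivative_eq_intros simp: field_simps)
        qed
        from MVT2[of x y u, OF _ der] y obtain z where z: "x < z" "z < y"
            "u y - u x = (y - x) * (s * d1 z - K / (1 - z))" by auto
        have "s * d1 z - K / (1 - z) \<ge> 0" using sd[of z] z y by auto
        then have "(y - x) * (s * d1 z - K / (1 - z)) \<ge> 0" using z by simp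
        then show ?thesis using z(3) by linarith
      qed
      define y where "y = 1 - (1 - x) * exp (-(2*B+1)/K)"
      have ex: "exp (-(2*B+1)/K) < 1" "exp (-(2*B+1)/K) > 0" using B0 K0 by (auto simp: divide_neg_pos)
      have "(1 - x) * exp (-(2*B+1)/K) < (1 - x) * 1" using ex x by (intro mult_strict_left_mono) auto
      moreover have "(1 - x) * exp (-(2*B+1)/K) > 0" using ex x by auto
      ultimately have yx: "y \<in> {x<..<1}" unfolding y_def by auto
      have ln: "ln (1 - y) = ln (1 - x) - (2*B+1)/K"
        using x K0 by (simp add: y_def ln_mult) (simp add: field_simps)
      have "u y \<ge> u x" by (rule umono[OF yx])
      then have "s * f y \<ge> s * f x + (2*B+1)" unfolding u_def ln using K0 by (simp add: right_diff_distrib)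
      moreover have "\<bar>s * f y\<bar> \<le> B" "\<bar>s * f x\<bar> \<le> B" using bnd[of y] bnd[of x] yx xin s1
        by (auto simp: abs_mult)
      ultimately show False by linarith
    qed
  qed
  then show ?thesis unfolding h_def[symmetric]
  proof -
    assume H: "\<forall>e>0. \<exists>a<1. \<forall>y\<in>{a<..<1}. \<bar>h y\<bar> < e"
    show "(h \<longlongrightarrow> 0) (at_left 1)"
    proof (rule tendstoI)
      fix e :: real assume "e > 0"
      then obtain a where a: "a < 1" "\<forall>y\<in>{a<..<1}. \<bar>h y\<bar> < e" using H by blast
      show "\<forall>\<^sub>F y in at_left 1. dist (h y) 0 < e"
        using eventually_at_left_real[OF a(1)] by eventually_elim (use a in auto)
    qed
  qed
qed



lemma endpoint_left:
  fixes f d1 hd :: "real \<Rightarrow> real" and B M :: real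
  assumes bnd: "\<And>x. x\<in>{-1<..<1} \<Longrightarrow> \<bar>f x\<bar> \<le> B"
    and df: "\<And>x. x\<in>{-1<..<1} \<Longrightarrow> (f has_real_derivative d1 x) (at x)"
    and dh: "\<And>x. x\<in>{-1<..<1} \<Longrightarrow> ((\<lambda>y. (1-y^2)*d1 y) has_real_derivative hd x) (at x)"
    and hb: "\<And>x. x\<in>{-1<..<1} \<Longrightarrow> \<bar>hd x\<bar> \<le> M"
  shows "((\<lambda>y. (1-y^2)*d1 y) \<longlongrightarrow> 0) (at_right (-1))"
proof -
  have m: "x\<in>{-1<..<1} \<Longrightarrow> -x \<in>{-1<..<1}" for x :: real by auto
  have "((\<lambda>y. (1-y^2)*(- d1 (-y))) \<longlongrightarrow> 0) (at_left 1)"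
  proof (rule endpoint_right[where f="\<lambda>x. f (-x)" and hd="\<lambda>x. hd (-x)" and B=B and M=M])
    fix x :: real assume x: "x\<in>{-1<..<1}"
    show "\<bar>f (-x)\<bar> \<le> B" using bnd[OF m[OF x]] .
    show "((\<lambda>x. f (-x)) has_real_derivative - d1 (- x)) (at x)"
      using df[OF m[OF x]] DERIV_mirror by blast
    have "((\<lambda>y. (1-y^2)*d1 y) has_real_derivative hd (-x)) (at (-x))" using dh[OF m[OF x]] .
    then have "((\<lambda>y. (1-(-y)^2)*d1 (-y)) has_real_derivative - hd (-x)) (at x)"
      using DERIV_mirror[of "\<lambda>y. (1-y^2)*d1 y"] by simp
    then have "((\<lambda>y. - ((1-(-y)^2)*d1 (-y))) has_real_derivative - (- hd (-x))) (at x)"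
      by (rule DERIV_minus)
    then show "((\<lambda>y. (1-y^2)*(- d1 (-y))) has_real_derivative hd (-x)) (at x)" by simp
    show "\<bar>hd (-x)\<bar> \<le> M" using hb[OF m[OF x]] .
  qed
  then have "((\<lambda>y. - ((1-y^2)*(- d1 (-y)))) \<longlongrightarrow> - 0) (at_left 1)" by (rule tendsto_minus)
  then have "((\<lambda>y. (1-(-y)^2)*d1 (-y)) \<longlongrightarrow> 0) (at_left (- (-1)))" by simp
  then show ?thesis unfolding at_right_minus[of "-1"] filterlim_filtermap .
qed



lemma isCont_legP: "isCont (legP k) x" "isCont (dP k) x"
  using deriv_legP[of k x] by (auto intro: DERIV_isCont)

lemma cont_legP: "continuous_on S (legP k)" "continuous_on S (dP k)"
  using isCont_legP by (auto intro!: continuous_at_imp_continuous_on)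

lemma isCont_tendsto_within: "isCont f a \<Longrightarrow> (f \<longlongrightarrow> f a) (at a within S)"
  by (rule tendsto_within_subset[of _ _ _ UNIV]) (auto simp: isCont_def)

lemma ode_moment:
  fixes p d1 d2 :: "real \<Rightarrow> real" and ch c :: real
  assumes cont: "continuous_on {-1..1} p"
    and D: "\<And>x. x\<in>{-1<..<1} \<Longrightarrow> (p has_real_derivative d1 x) (at x) \<and> (d1 has_real_derivative d2 x) (at x) \<and>
             (1-x^2)*d2 x - 2*x*d1 x + (ch - c^2*x^2)*p x = 0"
  shows "(ch - real k*(real k+1)) * integral {-1..1} (\<lambda>x. p x * legP k x)
       = c^2 * integral {-1..1} (\<lambda>x. (x*(x*p x)) * legP k x)"
proof -
  obtain B where B: "\<forall>x\<in>{-1..1}. \<bar>p x\<bar> \<le> B" using cont_bound[OF cont] by blast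
  define hd where "hd = (\<lambda>x::real. - (ch - c^2*x^2) * p x)"
  have dh: "((\<lambda>y. (1-y^2)*d1 y) has_real_derivative hd x) (at x)" if x: "x\<in>{-1<..<1}" for x
  proof -
    have "((\<lambda>y. (1-y^2)*d1 y) has_real_derivative (-2*x)*d1 x + (1-x^2)*d2 x) (at x)"
      using D[OF x] by (auto intro!: derivative_eq_intros simp: power2_eq_square)
    moreover have "(-2*x)*d1 x + (1-x^2)*d2 x = hd x" using D[OF x] by (simp add: hd_def algebra_simps)
    ultimately show ?thesis by simp
  qed
  have hb: "\<bar>hd x\<bar> \<le> (\<bar>ch\<bar> + c^2) * B" if x: "x\<in>{-1<..<1}" for x
  proof -
    have "\<bar>ch - c^2*x^2\<bar> \<le> \<bar>ch\<bar> + c^2"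
    proof -
      have "x^2 \<le> 1" using x by (simp add: abs_square_le_1 abs_le_iff)
      then have "c^2*x^2 \<le> c^2" by (simp add: mult_left_le)
      moreover have "c^2*x^2 \<ge> 0" by simp
      ultimately show ?thesis using abs_ge_self[of ch] abs_ge_minus_self[of ch] unfolding abs_le_iff by linarith
    qed
    moreover have "\<bar>p x\<bar> \<le> B" using B x by auto
    ultimately show ?thesis unfolding hd_def abs_mult abs_minus
      by (intro mult_mono) auto
  qed
  have bnd: "\<bar>p x\<bar> \<le> B" if "x\<in>{-1<..<1}" for x using B that by auto
  have dp: "(p has_real_derivative d1 x) (at x)" if "x\<in>{-1<..<1}" for x using D[OF that] by blast
  have lim1: "((\<lambda>y. (1-y^2)*d1 y) \<longlongrightarrow> 0) (at_left 1)"
    by (rule endpoint_right[OF bnd dp dh hb])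
  have lim2: "((\<lambda>y. (1-y^2)*d1 y) \<longlongrightarrow> 0) (at_right (-1))"
    by (rule endpoint_left[OF bnd dp dh hb])
  define h where "h = (\<lambda>y::real. (1-y^2)*d1 y)"
  have dh': "(h has_real_derivative hd x) (at x)" if x: "x\<in>{-1<..<1}" for x
    unfolding h_def by (rule dh[OF x])
  define F where "F = (\<lambda>x. h x * legP k x - (1-x^2) * p x * dP k x)"
  define Ft where "Ft = (\<lambda>x. if x \<in> {-1<..<1} then F x else 0)"
  define g where "g = (\<lambda>x. (real k*(real k+1) - ch + c^2*x^2) * p x * legP k x)"
  have dF: "(F has_real_derivative g x) (at x)" if x: "x\<in>{-1<..<1}" for x
  proof -
    have "(F has_real_derivative hd x * legP k x + h x * dP k x
             - ((-2*x) * p x * dP k x + (1-x^2)*d1 x*dP k x + (1-x^2)*p x*ddP k x)) (at x)"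
      unfolding F_def using D[OF x] dh'[OF x] deriv_legP[of k x]
      by (auto intro!: derivative_eq_intros simp: power2_eq_square algebra_simps)
    moreover have "hd x * legP k x + h x * dP k x
             - ((-2*x) * p x * dP k x + (1-x^2)*d1 x*dP k x + (1-x^2)*p x*ddP k x) = g x"
    proof -
      have e: "(1-x^2)*ddP k x = 2*x*dP k x - real k*(real k+1)*legP k x" using legP_ODE[of x k] by simp
      have "hd x * legP k x + h x * dP k x
             - ((-2*x) * p x * dP k x + (1-x^2)*d1 x*dP k x + (1-x^2)*p x*ddP k x)
            = hd x * legP k x - p x * ((1-x^2)*ddP k x) + 2*x*p x*dP k x"
        by (simp add: h_def algebra_simps)
      also have "\<dots> = g x" unfolding e hd_def g_def by (simp add: algebra_simps)
      finally show ?thesis .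
    qed
    ultimately show ?thesis by simp
  qed
  have dFt: "(Ft has_real_derivative g x) (at x)" if x: "x\<in>{-1<..<1}" for x
    by (rule has_field_derivative_transform_within_open[OF dF[OF x] _ x]) (auto simp: Ft_def)
  have Flim1: "(F \<longlongrightarrow> 0) (at_left 1)"
  proof -
    have "((\<lambda>x. h x * legP k x - (1-x^2) * p x * dP k x) \<longlongrightarrow> 0 * legP k 1 - (1-1^2) * p 1 * dP k 1) (at_left 1)"
      unfolding h_def by (intro tendsto_intros lim1 isCont_tendsto_within isCont_legP continuous_on_Icc_at_leftD[OF cont]) auto
    then show ?thesis by (simp add: F_def)
  qed
  have Flim2: "(F \<longlongrightarrow> 0) (at_right (-1))"
  proof -
    have "((\<lambda>x. h x * legP k x - (1-x^2) * p x * dP k x) \<longlongrightarrow> 0 * legP k (-1) - (1-(-1)^2) * p (-1) * dP k (-1)) (at_right (-1))"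
      unfolding h_def by (intro tendsto_intros lim2 isCont_tendsto_within isCont_legP continuous_on_Icc_at_rightD[OF cont]) auto
    then show ?thesis by (simp add: F_def)
  qed
  have cFt: "continuous_on {-1..1} Ft"
  proof (rule continuous_on_IccI)
    show "(Ft \<longlongrightarrow> Ft (-1)) (at_right (-1))"
    proof -
      have ev: "\<forall>\<^sub>F x in at_right (-1). x \<in> {-1<..<1::real}"
        using eventually_at_right_real[of "-1" "1::real"] by simp
      have "\<forall>\<^sub>F x in at_right (-1). F x = Ft x" using ev by eventually_elim (auto simp: Ft_def)
      then show ?thesis using Flim2 by (simp add: Ft_def tendsto_cong)
    qed
    show "(Ft \<longlongrightarrow> Ft 1) (at_left 1)"
    proof -
      have ev: "\<forall>\<^sub>F x in at_left 1. x \<in> {-1<..<1::real}"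
        using eventually_at_left_real[of "-1" "1::real"] by simp
      have "\<forall>\<^sub>F x in at_left 1. F x = Ft x" using ev by eventually_elim (auto simp: Ft_def)
      then show ?thesis using Flim1 by (simp add: Ft_def tendsto_cong)
    qed
    fix x :: real assume "-1 < x" "x < 1"
    then have "isCont Ft x" using dFt[of x] by (auto intro: DERIV_isCont)
    then show "Ft \<midarrow>x\<rightarrow> Ft x" by (simp add: isCont_def)
  qed simp
  have "(g has_integral (Ft 1 - Ft (-1))) {-1..1}"
    by (rule fundamental_theorem_of_calculus_interior[OF _ cFt])
       (auto simp: has_real_derivative_iff_has_vector_derivative[symmetric] intro: dFt)
  then have g0: "(g has_integral 0) {-1..1}" by (simp add: Ft_def)
  define I where "I = integral {-1..1} (\<lambda>x. p x * legP k x)"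
  define K where "K = integral {-1..1} (\<lambda>x. (x*(x*p x)) * legP k x)"
  have i1: "((\<lambda>x. p x * legP k x) has_integral I) {-1..1}"
    unfolding I_def by (intro integrable_integral integrable_continuous_interval continuous_intros cont cont_legP)
  have i2: "((\<lambda>x. (x*(x*p x)) * legP k x) has_integral K) {-1..1}"
    unfolding K_def by (intro integrable_integral integrable_continuous_interval continuous_intros cont cont_legP)
  have "((\<lambda>x. (real k*(real k+1) - ch) * (p x * legP k x) + c^2 * ((x*(x*p x)) * legP k x))
          has_integral ((real k*(real k+1) - ch) * I + c^2 * K)) {-1..1}"
    by (intro has_integral_add has_integral_mult_right i1 i2)
  moreover have "(\<lambda>x. (real k*(real k+1) - ch) * (p x * legP k x) + c^2 * ((x*(x*p x)) * legP k x)) = g"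
    by (rule ext) (simp add: g_def algebra_simps power2_eq_square)
  ultimately have "(g has_integral ((real k*(real k+1) - ch) * I + c^2 * K)) {-1..1}" by simp
  with g0 have "(real k*(real k+1) - ch) * I + c^2 * K = 0" by (rule has_integral_unique[symmetric])
  then show ?thesis unfolding I_def[symmetric] K_def[symmetric] by (simp add: algebra_simps)
qed



definition Sop :: "(nat \<Rightarrow> real) \<Rightarrow> nat \<Rightarrow> real" where
  "Sop I k = ((real k + 1) * I (Suc k) + real k * I (k - 1)) / (2 * real k + 1)"

lemma x_legP: "x * legP k x = ((real k + 1) * legP (Suc k) x + real k * legP (k - 1) x) / (2 * real k + 1)"
proof (cases k)
  case 0 then show ?thesis by simp
next
  case (Suc m)
  have "(real m + 2) * legP (Suc (Suc m)) x = (2 * real m + 3) * x * legP (Suc m) x - (real m + 1) * legP m x"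
    by (rule legP_rec)
  then have "(real m+2)*legP (Suc (Suc m)) x + (real m + 1)*legP m x = (2*real m+3)*(x*legP (Suc m) x)"
    by (simp add: algebra_simps del: legP.simps)
  moreover have "(2*real m+3) \<noteq> 0" by simp
  ultimately have "x*legP (Suc m) x = ((real m+2)*legP (Suc (Suc m)) x + (real m + 1)*legP m x) / (2*real m+3)"
    by (simp add: field_simps del: legP.simps)
  then show ?thesis using Suc by (simp add: algebra_simps del: legP.simps)
qed

lemma moment_shift:
  assumes cont: "continuous_on {-1..1} f"
  shows "integral {-1..1} (\<lambda>x. (x * f x) * legP k x) = Sop (\<lambda>j. integral {-1..1} (\<lambda>x. f x * legP j x)) k"
proof -
  have i: "((\<lambda>x. f x * legP j x) has_integral integral {-1..1} (\<lambda>x. f x * legP j x)) {-1..1}" for j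
    by (intro integrable_integral integrable_continuous_interval continuous_intros cont cont_legP)
  have "((\<lambda>x. ((real k + 1) * (f x * legP (Suc k) x) + real k * (f x * legP (k - 1) x)) / (2 * real k + 1))
     has_integral Sop (\<lambda>j. integral {-1..1} (\<lambda>x. f x * legP j x)) k) {-1..1}"
    unfolding Sop_def by (intro has_integral_divide has_integral_add has_integral_mult_right i)
  moreover have "(\<lambda>x. ((real k + 1) * (f x * legP (Suc k) x) + real k * (f x * legP (k - 1) x)) / (2 * real k + 1))
     = (\<lambda>x. (x * f x) * legP k x)"
  proof
    fix x
    have "(x * f x) * legP k x = f x * (x * legP k x)" by simp
    also have "\<dots> = ((real k + 1) * (f x * legP (Suc k) x) + real k * (f x * legP (k - 1) x)) / (2 * real k + 1)"
      unfolding x_legP by (simp add: algebra_simps add_divide_distrib)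
    finally show "((real k + 1) * (f x * legP (Suc k) x) + real k * (f x * legP (k - 1) x)) / (2 * real k + 1) = (x * f x) * legP k x" by simp
  qed
  ultimately show ?thesis by (simp add: integral_unique)
qed

lemma series_identity:
  fixes I q :: "nat \<Rightarrow> real" and t :: real
  assumes q1: "q (Suc 0) = t * q 0 - 1"
    and qrec: "\<And>k. (real k+2)*q (Suc (Suc k)) = (2*real k+3)*t*q (Suc k) - (real k+1)*q k"
    and N: "N \<ge> 1"
  shows "t * (\<Sum>k<N. (real k + 1/2) * I k * q k) =
         I 0 / 2 + (\<Sum>k<N. (real k + 1/2) * Sop I k * q k) + real N / 2 * (I (N-1) * q N - I N * q (N-1))"
  using N
proof (induction N rule: dec_induct)
  case base
  show ?case by (simp add: Sop_def q1 algebra_simps)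
next
  case (step N)
  obtain m where m: "N = Suc m" using step(1) by (cases N) auto
  have r: "(2*real N+1)*t*q N = (real N+1)*q (Suc N) + real N * q (N-1)"
    using qrec[of m] m by (simp add: algebra_simps)
  have S: "(real N + 1/2) * Sop I N = ((real N + 1) * I (Suc N) + real N * I (N - 1)) / 2"
    unfolding Sop_def by (simp add: field_simps)
  have "t * (\<Sum>k<Suc N. (real k + 1/2) * I k * q k) = t * (\<Sum>k<N. (real k + 1/2) * I k * q k) + (real N + 1/2) * I N * (t * q N)"
    by (simp add: algebra_simps)
  also have "\<dots> = I 0 / 2 + (\<Sum>k<N. (real k + 1/2) * Sop I k * q k) + real N / 2 * (I (N-1) * q N - I N * q (N-1))
      + I N * ((2*real N+1)*t*q N) / 2"
    using step(3) by (simp add: algebra_simps)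
  also have "\<dots> = I 0 / 2 + (\<Sum>k<Suc N. (real k + 1/2) * Sop I k * q k) + real (Suc N) / 2 * (I (Suc N - 1) * q (Suc N) - I (Suc N) * q (Suc N - 1))"
    unfolding r sum.lessThan_Suc S by (simp add: algebra_simps add_divide_distrib diff_divide_distrib)
  finally show ?case .
qed



lemma Sop_bound: "k \<ge> 1 \<Longrightarrow> \<bar>Sop I k\<bar> \<le> \<bar>I (Suc k)\<bar> + \<bar>I (k - 1)\<bar>"
proof -
  have d: "2 * real k + 1 > 0" by simp
  have "\<bar>Sop I k\<bar> = \<bar>(real k + 1) * I (Suc k) + real k * I (k - 1)\<bar> / (2 * real k + 1)"
    unfolding Sop_def using d by simp
  also have "\<dots> \<le> ((real k + 1) * \<bar>I (Suc k)\<bar> + real k * \<bar>I (k - 1)\<bar>) / (2 * real k + 1)"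
    using d by (intro divide_right_mono) (auto simp: abs_mult intro: order_trans[OF abs_triangle_ineq])
  also have "\<dots> \<le> ((2 * real k + 1) * \<bar>I (Suc k)\<bar> + (2 * real k + 1) * \<bar>I (k - 1)\<bar>) / (2 * real k + 1)"
    using d by (intro divide_right_mono add_mono mult_right_mono) auto
  also have "\<dots> = \<bar>I (Suc k)\<bar> + \<bar>I (k - 1)\<bar>" using d by (simp add: field_simps)
  finally show "\<bar>Sop I k\<bar> \<le> \<bar>I (Suc k)\<bar> + \<bar>I (k - 1)\<bar>" .
qed

lemma SSop_bound:
  assumes "k \<ge> 2" shows "\<bar>Sop (Sop I) k\<bar> \<le> \<bar>I (k+2)\<bar> + 2*\<bar>I k\<bar> + \<bar>I (k-2)\<bar>"
proof -
  have "\<bar>Sop (Sop I) k\<bar> \<le> \<bar>Sop I (Suc k)\<bar> + \<bar>Sop I (k - 1)\<bar>" using Sop_bound[of k] assms by simp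
  also have "\<bar>Sop I (Suc k)\<bar> \<le> \<bar>I (k+2)\<bar> + \<bar>I k\<bar>" using Sop_bound[of "Suc k" I] by simp
  also have "\<bar>Sop I (k - 1)\<bar> \<le> \<bar>I k\<bar> + \<bar>I (k-2)\<bar>" using Sop_bound[of "k - 1" I] assms
    by (simp add: Suc_diff_Suc numeral_2_eq_2)
  finally show ?thesis by simp
qed

lemma decay:
  fixes I :: "nat \<Rightarrow> real" and ch E A :: real
  assumes rec: "\<And>k. (ch - real k*(real k+1)) * I k = E * Sop (Sop I) k"
    and E: "E \<ge> 0"
    and bnd: "\<And>k. \<bar>I k\<bar> \<le> A * 7^k"
  shows "\<exists>C k0. \<forall>k\<ge>k0. \<bar>I k\<bar> \<le> C * (1/28)^k"
proof -
  define \<eta> :: real where "\<eta> = 1/76832"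
  obtain n0 :: nat where n0: "\<bar>ch\<bar> + 2*E + 49*E/\<eta> + 1 \<le> real n0"
    using real_arch_simple by blast
  define k0 where "k0 = max n0 2"
  have k0: "real k0 \<ge> \<bar>ch\<bar> + 2*E + 49*E/\<eta> + 1" "k0 \<ge> 2"
    using n0 by (auto simp: k0_def)
  have A0: "A \<ge> 0" using bnd[of 0] by auto
  have key: "\<bar>I k\<bar> \<le> \<eta>/49 * (\<bar>I (k+2)\<bar> + \<bar>I (k-2)\<bar>)" if k: "k \<ge> k0" for k
  proof -
    define D where "D = real k*(real k+1) - ch - 2*E"
    have kk: "real k*(real k+1) \<ge> real k" by (simp add: algebra_simps)
    have "real k \<ge> real k0" using k by simp
    then have DD: "D \<ge> 49*E/\<eta> + 1" using k0 kk abs_ge_self[of ch] unfolding D_def by linarith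
    then have Dp: "D > 0" using E by (simp add: \<eta>_def)
    have "(real k*(real k+1) - ch) * \<bar>I k\<bar> \<le> \<bar>(ch - real k*(real k+1)) * I k\<bar>"
    proof -
      have "real k*(real k+1) - ch \<le> \<bar>ch - real k*(real k+1)\<bar>" by linarith
      then have "(real k*(real k+1) - ch) * \<bar>I k\<bar> \<le> \<bar>ch - real k*(real k+1)\<bar> * \<bar>I k\<bar>"
        by (rule mult_right_mono) simp
      then show ?thesis by (simp add: abs_mult)
    qed
    also have "\<dots> = E * \<bar>Sop (Sop I) k\<bar>" using rec[of k] E by (simp add: abs_mult)
    also have "\<dots> \<le> E * (\<bar>I (k+2)\<bar> + 2*\<bar>I k\<bar> + \<bar>I (k-2)\<bar>)"
      using SSop_bound[of k I] k k0 E by (intro mult_left_mono) auto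
    finally have "D * \<bar>I k\<bar> \<le> E * (\<bar>I (k+2)\<bar> + \<bar>I (k-2)\<bar>)" unfolding D_def by (simp add: algebra_simps)
    also have "\<dots> \<le> (\<eta>*D/49) * (\<bar>I (k+2)\<bar> + \<bar>I (k-2)\<bar>)"
    proof (rule mult_right_mono)
      show "E \<le> \<eta>*D/49" using DD by (simp add: \<eta>_def field_simps)
    qed simp
    finally have "D * \<bar>I k\<bar> \<le> D * (\<eta>/49 * (\<bar>I (k+2)\<bar> + \<bar>I (k-2)\<bar>))" by (simp add: algebra_simps)
    then show ?thesis using Dp by simp
  qed
  have ind: "\<forall>k\<ge>k0 + 2*i. \<bar>I k\<bar> \<le> A * 7^k * (2*\<eta>)^i" for i
  proof (induction i)
    case 0 then show ?case using bnd by simp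
  next
    case (Suc i)
    show ?case
    proof (intro allI impI)
      fix k assume k: "k \<ge> k0 + 2 * Suc i"
      have a: "\<bar>I (k+2)\<bar> \<le> A * 7^(k+2) * (2*\<eta>)^i" by (rule Suc.IH[rule_format]) (use k in simp)
      have b: "\<bar>I (k-2)\<bar> \<le> A * 7^(k-2) * (2*\<eta>)^i" by (rule Suc.IH[rule_format]) (use k in simp)
      obtain j where j: "k = j + 2" using k by (intro that[of "k-2"]) simp
      have e7: "(7::real)^(k+2) = 49 * 7^k" "(7::real)^(k-2) = 7^k / 49"
        unfolding j by (simp_all add: power_add)
      have "\<bar>I k\<bar> \<le> \<eta>/49 * (\<bar>I (k+2)\<bar> + \<bar>I (k-2)\<bar>)" using key k by simp
      also have "\<dots> \<le> \<eta>/49 * (A * 7^(k+2) * (2*\<eta>)^i + A * 7^(k-2) * (2*\<eta>)^i)"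
        using a b by (intro mult_left_mono add_mono) (auto simp: \<eta>_def)
      also have "\<dots> = \<eta> * A * 7^k * (2*\<eta>)^i * (1 + 1/2401)"
        unfolding e7 by (simp add: algebra_simps)
      also have "\<dots> \<le> \<eta> * A * 7^k * (2*\<eta>)^i * 2"
        using A0 by (intro mult_left_mono) (auto simp: \<eta>_def)
      also have "\<dots> = A * 7^k * (2*\<eta>)^Suc i" by simp
      finally show "\<bar>I k\<bar> \<le> A * 7^k * (2*\<eta>)^Suc i" .
    qed
  qed
  define \<theta> :: real where "\<theta> = 1/196"
  have th: "2*\<eta> = \<theta>^2" by (simp add: \<eta>_def \<theta>_def power2_eq_square)
  show ?thesis
  proof (intro exI allI impI)
    fix k assume k: "k \<ge> k0"
    define i where "i = (k - k0) div 2"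
    have ki: "k \<ge> k0 + 2*i" using k unfolding i_def by linarith
    have "\<bar>I k\<bar> \<le> A * 7^k * (2*\<eta>)^i" using ind ki by blast
    also have "(2*\<eta>)^i = \<theta>^(2*i)" by (simp add: th power_mult)
    also have "\<theta>^(2*i) \<le> \<theta>^k * 196^(k0+1)"
    proof -
      have "\<theta>^(2*i + (k0+1)) \<le> \<theta>^k"
        by (rule power_decreasing) (use k in \<open>auto simp: i_def \<theta>_def\<close>)
      then have "\<theta>^(2*i) * \<theta>^(k0+1) \<le> \<theta>^k" by (simp only: power_add)
      moreover have "\<theta>^(k0+1) * 196^(k0+1) = 1" by (simp add: \<theta>_def power_mult_distrib[symmetric])
      ultimately show ?thesis
      proof -
        assume a: "\<theta>^(2*i) * \<theta>^(k0+1) \<le> \<theta>^k" and b: "\<theta>^(k0+1) * 196^(k0+1) = 1"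
        have "\<theta>^(2*i) = (\<theta>^(2*i) * \<theta>^(k0+1)) * 196^(k0+1)" by (simp only: mult.assoc b)
        also have "\<dots> \<le> \<theta>^k * 196^(k0+1)" by (rule mult_right_mono[OF a]) simp
        finally show ?thesis .
      qed
    qed
    finally have "\<bar>I k\<bar> \<le> A * 7^k * (\<theta>^k * 196^(k0+1))" using A0 by (simp add: mult_left_mono)
    also have "\<dots> = (A * 196^(k0+1)) * (7*\<theta>)^k" by (simp add: power_mult_distrib)
    also have "7*\<theta> = 1/28" by (simp add: \<theta>_def)
    finally show "\<bar>I k\<bar> \<le> (A * 196^(k0+1)) * (1/28)^k" .
  qed
qed



lemma N_le_2pow: "real N \<le> 2^N"
proof -
  have "N < 2^N" by simp
  then have "real N < real (2^N)" by (simp only: of_nat_less_iff)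
  then show ?thesis by simp
qed

lemma N_quarter: "real N * (1/4::real)^N \<le> (1/2)^N"
proof -
  have "real N * (1/4::real)^N \<le> 2^N * (1/4)^N" by (intro mult_right_mono N_le_2pow) simp
  also have "\<dots> = (1/2)^N" by (simp add: power_mult_distrib[symmetric])
  finally show ?thesis .
qed

lemma pow28_7: "(1/28::real)^n * 7^n = (1/4)^n"
  by (simp add: power_mult_distrib[symmetric])

lemma bd_zero:
  fixes x y :: "nat \<Rightarrow> real"
  assumes ev: "\<forall>n\<ge>n0. \<bar>x n\<bar> \<le> C*(1/28)^n" and y: "\<forall>n. \<bar>y n\<bar> \<le> D*7^n"
    and C: "C \<ge> 0" and D: "D \<ge> 0"
  shows "(\<lambda>N. real N / 2 * (x (N-1) * y N - x N * y (N-1))) \<longlonglongrightarrow> 0"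
proof (rule Lim_null_comparison)
  show "((\<lambda>N. 29*C*D*(1/2::real)^N) \<longlonglongrightarrow> 0)"
    by (intro tendsto_mult_right_zero LIMSEQ_power_zero) simp
  have "\<forall>\<^sub>F N in sequentially. N \<ge> n0 + 1" by (rule eventually_ge_at_top)
  then show "\<forall>\<^sub>F N in sequentially. norm (real N / 2 * (x (N-1) * y N - x N * y (N-1))) \<le> 29*C*D*(1/2)^N"
  proof eventually_elim
    case (elim N)
    obtain m where m: "N = Suc m" using elim by (cases N) auto
    have a: "\<bar>x (N-1) * y N\<bar> \<le> 28*C*D*(1/4)^N"
    proof -
      have "\<bar>x (N-1) * y N\<bar> \<le> (C*(1/28)^m) * (D*7^N)"
        unfolding abs_mult using ev elim y[rule_format, of N] m by (intro mult_mono) auto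
      also have "\<dots> = 28*C*D*((1/28)^N * 7^N)" unfolding m by simp
      finally show ?thesis unfolding pow28_7 .
    qed
    have b: "\<bar>x N * y (N-1)\<bar> \<le> C*D*(1/4)^N"
    proof -
      have "\<bar>x N\<bar> \<le> C*(1/28)^N" using ev elim by auto
      then have "\<bar>x N * y (N-1)\<bar> \<le> (C*(1/28)^N) * (D*7^m)"
        unfolding abs_mult using y m by (intro mult_mono) auto
      also have "\<dots> \<le> (C*(1/28)^N) * (D*7^N)" unfolding m using C D
        by (intro mult_left_mono) auto
      also have "\<dots> = C*D*((1/28)^N * 7^N)" by simp
      finally show ?thesis unfolding pow28_7 .
    qed
    have "norm (real N / 2 * (x (N-1) * y N - x N * y (N-1))) \<le> real N / 2 * (\<bar>x (N-1) * y N\<bar> + \<bar>x N * y (N-1)\<bar>)"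
    proof -
      have "\<bar>x (N-1) * y N - x N * y (N-1)\<bar> \<le> \<bar>x (N-1) * y N\<bar> + \<bar>x N * y (N-1)\<bar>"
        by (rule abs_triangle_ineq4)
      then have "real N / 2 * \<bar>x (N-1) * y N - x N * y (N-1)\<bar> \<le> real N / 2 * (\<bar>x (N-1) * y N\<bar> + \<bar>x N * y (N-1)\<bar>)"
        by (rule mult_left_mono) simp
      then show ?thesis by (simp add: abs_mult)
    qed
    also have "\<dots> \<le> real N / 2 * (29*C*D*(1/4)^N)"
      using a b by (intro mult_left_mono) auto
    also have "\<dots> = 29/2*C*D*(real N * (1/4)^N)" by simp
    also have "\<dots> \<le> 29/2*C*D*((1/2)^N)" using C D by (intro mult_left_mono N_quarter) auto
    also have "\<dots> \<le> 29*C*D*(1/2)^N" using C D by simp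
    finally show ?case .
  qed
qed



lemma Sk_le_2pow: "real k + 1 \<le> 2^k"
proof -
  have "k < 2^k" by simp
  then have "Suc k \<le> 2^k" by (rule Suc_leI)
  then have "real (Suc k) \<le> real (2^k)" by (simp only: of_nat_le_iff)
  then show ?thesis by simp
qed

lemma series_deriv:
  fixes a :: "nat \<Rightarrow> real" and C :: real
  assumes dec: "\<forall>k\<ge>k0. \<bar>a k\<bar> \<le> C*(real k + 1)*(1/28)^k" and C: "C \<ge> 0"
    and t: "t \<in> {-1<..<1::real}"
  shows "summable (\<lambda>k. a k * legQ k t)" "summable (\<lambda>k. a k * dQ k t)" "summable (\<lambda>k. a k * ddQ k t)"
    "((\<lambda>x. \<Sum>k. a k * legQ k x) has_real_derivative (\<Sum>k. a k * dQ k t)) (at t)"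
    "((\<lambda>x. \<Sum>k. a k * dQ k x) has_real_derivative (\<Sum>k. a k * ddQ k t)) (at t)"
proof -
  define r where "r = (1 + \<bar>t\<bar>)/2"
  have ta: "\<bar>t\<bar> < 1" using t by auto
  have r1a: "-r < t" unfolding r_def using ta by (cases "t \<ge> 0") (auto simp: field_simps)
  have r1b: "t < r" unfolding r_def using ta by (cases "t \<ge> 0") (auto simp: field_simps)
  note r1 = r1a r1b
  have r: "0 \<le> r" "r < 1" "t \<in> {-r<..<r}" using ta r1 by (auto simp: r_def)
  obtain D where D: "\<forall>k. \<forall>x\<in>{-r..r}. \<bar>legQ k x\<bar> \<le> D*7^k \<and> \<bar>dQ k x\<bar> \<le> D*7^k \<and> \<bar>ddQ k x\<bar> \<le> D*7^k"
    using legQ_bound[OF r(1,2)] by blast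
  have "(0::real) \<in> {-r..r}" using r(1) by auto
  then have "\<bar>legQ 0 0\<bar> \<le> D*7^0" by (rule D[rule_format, THEN conjunct1])
  then have "\<bar>legQ 0 0\<bar> \<le> D" by (simp only: power_0 mult_1_right)
  then have D0: "D \<ge> 0" using abs_ge_zero[of "legQ 0 0"] by linarith
  define S where "S = {-r<..<r}"
  have SS: "S \<subseteq> {-1<..<1}" "S \<subseteq> {-r..r}" using r by (auto simp: S_def)
  define M where "M = (\<lambda>k. \<bar>a k\<bar> * (D*7^k))"
  have Msum: "summable M"
  proof (rule summable_comparison_test_ev)
    show "summable (\<lambda>k. C*D*(1/2::real)^k)" by (intro summable_mult summable_geometric) simp
    have "\<forall>\<^sub>F k in sequentially. k \<ge> k0" by (rule eventually_ge_at_top)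
    then show "\<forall>\<^sub>F k in sequentially. norm (M k) \<le> C*D*(1/2)^k"
    proof eventually_elim
      case (elim k)
      have "norm (M k) = \<bar>a k\<bar> * (D*7^k)" using D0 by (simp add: M_def)
      also have "\<dots> \<le> (C*(real k + 1)*(1/28)^k) * (D*7^k)" using dec elim D0 by (intro mult_right_mono) auto
      also have "\<dots> = C*D*((real k + 1) * ((1/28)^k * 7^k))" by (simp add: algebra_simps)
      also have "\<dots> = C*D*((real k + 1) * (1/4)^k)" by (simp only: pow28_7)
      also have "\<dots> \<le> C*D*(2^k * (1/4)^k)" using C D0 by (intro mult_left_mono mult_right_mono Sk_le_2pow) auto
      also have "\<dots> = C*D*(1/2)^k" by (simp add: power_mult_distrib[symmetric])
      finally show ?case .
    qed
  qed
  have bQ: "norm (a k * legQ k x) \<le> M k" "norm (a k * dQ k x) \<le> M k" "norm (a k * ddQ k x) \<le> M k"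
    if "x \<in> S" for k x
  proof -
    have x: "x \<in> {-r..r}" using SS that by auto
    have h: "\<bar>legQ k x\<bar> \<le> D*7^k" "\<bar>dQ k x\<bar> \<le> D*7^k" "\<bar>ddQ k x\<bar> \<le> D*7^k" using D x by auto
    show "norm (a k * legQ k x) \<le> M k" "norm (a k * dQ k x) \<le> M k" "norm (a k * ddQ k x) \<le> M k"
      unfolding M_def real_norm_def abs_mult by (intro mult_left_mono h abs_ge_zero)+
  qed
  have sm: "summable (\<lambda>k. a k * legQ k x)" "summable (\<lambda>k. a k * dQ k x)" "summable (\<lambda>k. a k * ddQ k x)"
    if "x \<in> S" for x
    by (rule summable_comparison_test'[OF Msum, where N=0], rule bQ[OF that])+
  have tS: "t \<in> S" using r by (simp add: S_def)
  then show "summable (\<lambda>k. a k * legQ k t)" "summable (\<lambda>k. a k * dQ k t)" "summable (\<lambda>k. a k * ddQ k t)"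
    using sm by auto
  have cS: "convex S" by (simp add: S_def)
  have intS: "t \<in> interior S" using tS by (simp add: S_def)
  have dQS: "((\<lambda>x. a n * legQ n x) has_field_derivative a n * dQ n x) (at x within S)"
    "((\<lambda>x. a n * dQ n x) has_field_derivative a n * ddQ n x) (at x within S)" if "x \<in> S" for n x
  proof -
    have "x \<in> {-1<..<1}" using SS that by auto
    note d = deriv_legQ[OF this, of n]
    show "((\<lambda>x. a n * legQ n x) has_field_derivative a n * dQ n x) (at x within S)"
      by (rule has_field_derivative_at_within, rule DERIV_cmult, rule conjunct1[OF d])
    show "((\<lambda>x. a n * dQ n x) has_field_derivative a n * ddQ n x) (at x within S)"
      by (rule has_field_derivative_at_within, rule DERIV_cmult, rule conjunct2[OF d])
  qed
  have u1: "uniformly_convergent_on S (\<lambda>k x. \<Sum>i<k. a i * dQ i x)"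
    by (rule Weierstrass_m_test'[OF bQ(2) Msum])
  have u2: "uniformly_convergent_on S (\<lambda>k x. \<Sum>i<k. a i * ddQ i x)"
    by (rule Weierstrass_m_test'[OF bQ(3) Msum])
  show "((\<lambda>x. \<Sum>k. a k * legQ k x) has_real_derivative (\<Sum>k. a k * dQ k t)) (at t)"
    by (rule has_field_derivative_series'(2)[OF cS dQS(1) u1 tS sm(1)[OF tS] intS])
  show "((\<lambda>x. \<Sum>k. a k * dQ k x) has_real_derivative (\<Sum>k. a k * ddQ k t)) (at t)"
    by (rule has_field_derivative_series'(2)[OF cS dQS(2) u2 tS sm(2)[OF tS] intS])
qed



theorem theorem68:
  fixes c :: real and psi :: "nat \<Rightarrow> real \<Rightarrow> real" and chi :: "nat \<Rightarrow> real" and n :: nat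
  assumes "c > 0" and "pswf_system c psi chi"
  shows "\<exists>Phi Phi1 Phi2. \<forall>t\<in>{-1<..<1::real}.
           (\<lambda>k. alpha psi n k * legQ k t) sums Phi t \<and>
           (Phi has_real_derivative Phi1 t) (at t) \<and>
           (Phi1 has_real_derivative Phi2 t) (at t) \<and>
           (1 - t\<^sup>2) * Phi2 t - 2 * t * Phi1 t + (chi n - c\<^sup>2 * t\<^sup>2) * Phi t
             = - c\<^sup>2 * (alpha psi n 0 * t + alpha psi n 1 / 3)"
proof -
  define p where "p = psi n"
  define ch where "ch = chi n"
  from assms(2) have cont: "continuous_on {-1..1} p"
    and "\<exists>d1 d2. \<forall>x\<in>{-1<..<1}.
            (p has_real_derivative d1 x) (at x) \<and>
            (d1 has_real_derivative d2 x) (at x) \<and>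
            (1 - x\<^sup>2) * d2 x - 2 * x * d1 x + (ch - c\<^sup>2 * x\<^sup>2) * p x = 0"
    unfolding pswf_system_def p_def ch_def by blast+
  then obtain d1 d2 where D: "\<And>x. x\<in>{-1<..<1} \<Longrightarrow>
            (p has_real_derivative d1 x) (at x) \<and>
            (d1 has_real_derivative d2 x) (at x) \<and>
            (1 - x\<^sup>2) * d2 x - 2 * x * d1 x + (ch - c\<^sup>2 * x\<^sup>2) * p x = 0" by blast
  define I where "I = (\<lambda>k. integral {-1..1} (\<lambda>x. p x * legP k x))"
  define a where "a = (\<lambda>k. alpha psi n k)"
  have a_eq: "a k = (real k + 1/2) * I k" for k by (simp add: a_def alpha_def I_def p_def)
  have cont2: "continuous_on {-1..1} (\<lambda>x. x * p x)" by (intro continuous_intros cont)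
  have mom1: "(\<lambda>j. integral {-1..1} (\<lambda>x. (x * p x) * legP j x)) = Sop I"
    by (rule ext) (simp add: moment_shift[OF cont] I_def)
  have mom2: "integral {-1..1} (\<lambda>x. (x * (x * p x)) * legP k x) = Sop (Sop I) k" for k
    using moment_shift[OF cont2, of k] mom1 by simp
  have rec: "(ch - real k*(real k+1)) * I k = c^2 * Sop (Sop I) k" for k
    using ode_moment[OF cont D, of k] mom2[of k] by (simp add: I_def)
  obtain B where B: "\<forall>x\<in>{-1..1}. \<bar>p x\<bar> \<le> B" using cont_bound[OF cont] by blast
  have "\<bar>p 0\<bar> \<le> B" using B by simp
  then have B0: "B \<ge> 0" using abs_ge_zero[of "p 0"] by linarith
  have Ibnd: "\<bar>I k\<bar> \<le> (2*B) * 7^k" for k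
  proof -
    have "norm (integral {-1..1} (\<lambda>x. p x * legP k x)) \<le> (B*7^k) * (1 - (-1))"
    proof (rule integral_bound)
      show "continuous_on {-1..1} (\<lambda>x. p x * legP k x)" by (intro continuous_intros cont cont_legP)
      fix x :: real assume x: "x \<in> {-1..1}"
      have "\<bar>p x\<bar> \<le> B" using B x by auto
      moreover have "\<bar>legP k x\<bar> \<le> 7^k" using x by (intro legP_bound) auto
      ultimately show "norm (p x * legP k x) \<le> B*7^k" by (simp add: abs_mult mult_mono' B0)
    qed simp
    then show ?thesis by (simp add: I_def)
  qed
  obtain C k0 where Cdec: "\<forall>k\<ge>k0. \<bar>I k\<bar> \<le> C * (1/28)^k"
    using decay[OF rec _ Ibnd] by auto
  have C0: "C \<ge> 0"
  proof -
    have "\<bar>I k0\<bar> \<le> C * (1/28)^k0" using Cdec by simp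
    then have "0 \<le> C * (1/28)^k0" using abs_ge_zero[of "I k0"] by linarith
    moreover have "(1/28::real)^k0 > 0" by simp
    ultimately show ?thesis by (simp add: zero_le_mult_iff)
  qed
  have adec: "\<forall>k\<ge>k0. \<bar>a k\<bar> \<le> C*(real k + 1)*(1/28)^k"
  proof (intro allI impI)
    fix k assume k: "k \<ge> k0"
    have "\<bar>a k\<bar> = (real k + 1/2) * \<bar>I k\<bar>" by (simp add: a_eq abs_mult)
    also have "\<dots> \<le> (real k + 1) * (C * (1/28)^k)" using Cdec k by (intro mult_mono) auto
    finally show "\<bar>a k\<bar> \<le> C*(real k + 1)*(1/28)^k" by (simp add: algebra_simps)
  qed
  define J where "J = Sop I"
  have Jdec: "\<forall>k\<ge>k0+1. \<bar>J k\<bar> \<le> (29*C) * (1/28)^k"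
  proof (intro allI impI)
    fix k assume k: "k \<ge> k0+1"
    then obtain m where m: "k = Suc m" by (cases k) auto
    have "\<bar>J k\<bar> \<le> \<bar>I (Suc k)\<bar> + \<bar>I (k - 1)\<bar>" unfolding J_def using k by (intro Sop_bound) auto
    also have "\<dots> \<le> C * (1/28)^(Suc k) + C * (1/28)^m"
    proof (rule add_mono)
      show "\<bar>I (Suc k)\<bar> \<le> C * (1/28)^(Suc k)" by (rule Cdec[rule_format]) (use k in simp)
      have "k - 1 = m" using m by simp
      then show "\<bar>I (k - 1)\<bar> \<le> C * (1/28)^m" using Cdec[rule_format, of m] k m by simp
    qed
    also have "\<dots> = C * (1/28)^k * (1/28 + 28)" by (simp add: m algebra_simps)
    also have "\<dots> \<le> C * (1/28)^k * 29" using C0 by (intro mult_left_mono) auto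
    finally show "\<bar>J k\<bar> \<le> (29*C) * (1/28)^k" by (simp add: algebra_simps)
  qed
  define Phi where "Phi = (\<lambda>x. \<Sum>k. a k * legQ k x)"
  define Phi1 where "Phi1 = (\<lambda>x. \<Sum>k. a k * dQ k x)"
  define Phi2 where "Phi2 = (\<lambda>x. \<Sum>k. a k * ddQ k x)"
  show ?thesis
  proof (intro exI ballI conjI)
    fix t :: real assume t: "t \<in> {-1<..<1}"
    note sd = series_deriv[OF adec C0 t]
    show "(\<lambda>k. alpha psi n k * legQ k t) sums Phi t"
      unfolding Phi_def a_def[symmetric] by (rule summable_sums[OF sd(1)])
    show "(Phi has_real_derivative Phi1 t) (at t)" unfolding Phi_def Phi1_def by (rule sd(4))
    show "(Phi1 has_real_derivative Phi2 t) (at t)" unfolding Phi1_def Phi2_def by (rule sd(5))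
    define q where "q = (\<lambda>k. legQ k t)"
    have q1: "q (Suc 0) = t * q 0 - 1" by (simp add: q_def)
    have qrec: "(real k+2)*q (Suc (Suc k)) = (2*real k+3)*t*q (Suc k) - (real k+1)*q k" for k
      unfolding q_def by (rule legQ_rec)
    define T where "T = (\<lambda>k. a k * ((1-t^2)*ddQ k t - 2*t*dQ k t + (ch - c^2*t^2)*legQ k t))"
    define bd1 where "bd1 = (\<lambda>N. real N / 2 * (I (N-1) * q N - I N * q (N-1)))"
    define bd2 where "bd2 = (\<lambda>N. real N / 2 * (J (N-1) * q N - J N * q (N-1)))"
    have lim1: "(\<lambda>N. \<Sum>k<N. T k) \<longlonglongrightarrow> (1 - t^2) * Phi2 t - 2 * t * Phi1 t + (ch - (c^2) * t^2) * Phi t"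
    proof -
      have e: "(\<Sum>k<N. T k) = (1-t^2) * (\<Sum>k<N. a k * ddQ k t) - 2*t*(\<Sum>k<N. a k * dQ k t)
                  + (ch - c^2*t^2) * (\<Sum>k<N. a k * legQ k t)" for N
        by (simp add: T_def sum_distrib_left sum_subtractf sum.distrib algebra_simps)
      have s: "(\<lambda>N. \<Sum>k<N. a k * ddQ k t) \<longlonglongrightarrow> Phi2 t" "(\<lambda>N. \<Sum>k<N. a k * dQ k t) \<longlonglongrightarrow> Phi1 t"
              "(\<lambda>N. \<Sum>k<N. a k * legQ k t) \<longlonglongrightarrow> Phi t"
        using summable_sums[OF sd(3)] summable_sums[OF sd(2)] summable_sums[OF sd(1)]
        by (simp_all add: sums_def Phi_def Phi1_def Phi2_def)
      show ?thesis unfolding e by (intro tendsto_intros s)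
    qed
    have eq: "(\<Sum>k<N. T k) = - (c^2) * (a 0 * t + a 1 / 3) - (c^2) * (bd2 N + t * bd1 N)" if N: "N \<ge> 1" for N
    proof -
      define A where "A = (\<Sum>k<N. (real k + 1/2) * I k * q k)"
      define BB where "BB = (\<Sum>k<N. (real k + 1/2) * Sop I k * q k)"
      define CC where "CC = (\<Sum>k<N. (real k + 1/2) * Sop J k * q k)"
      have TT: "T k = c^2 * ((real k + 1/2) * Sop J k * q k) - (c^2) * t^2 * ((real k + 1/2) * I k * q k)" for k
      proof -
        have o: "(1-t^2)*ddQ k t - 2*t*dQ k t = - (real k*(real k+1)*legQ k t)"
          using legQ_ODE[OF t, of k] by simp
        have "T k = a k * (((1-t^2)*ddQ k t - 2*t*dQ k t) + (ch - c^2*t^2)*legQ k t)" by (simp add: T_def)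
        also have "\<dots> = a k * (- (real k*(real k+1)*legQ k t) + (ch - c^2*t^2)*legQ k t)" by (simp only: o)
        also have "\<dots> = (real k + 1/2) * ((ch - real k*(real k+1)) * I k) * q k - c^2*t^2*((real k + 1/2) * I k * q k)"
          by (simp add: a_eq q_def algebra_simps)
        also have "\<dots> = c^2 * ((real k + 1/2) * Sop J k * q k) - (c^2) * t^2 * ((real k + 1/2) * I k * q k)"
          unfolding rec J_def by (simp add: algebra_simps)
        finally show ?thesis .
      qed
      have sT: "(\<Sum>k<N. T k) = c^2 * CC - (c^2) * t^2 * A"
        unfolding TT CC_def A_def by (simp add: sum_subtractf sum_distrib_left)
      have i1: "t * A = I 0 / 2 + BB + bd1 N"
        unfolding A_def BB_def bd1_def by (rule series_identity[OF q1 qrec N])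
      have i2: "t * BB = J 0 / 2 + CC + bd2 N"
        unfolding BB_def CC_def bd2_def J_def by (rule series_identity[OF q1 qrec N])
      have J0: "J 0 = I 1" by (simp add: J_def Sop_def)
      have a01: "a 0 = I 0 / 2" "a 1 = 3/2 * I 1" by (simp_all add: a_eq)
      have "c^2 * t^2 * A = c^2 * t * (t * A)" by (simp add: power2_eq_square)
      also have "\<dots> = c^2 * t * (I 0 / 2 + bd1 N) + c^2 * (t * BB)" unfolding i1 by (simp add: algebra_simps)
      also have "\<dots> = c^2 * t * (I 0 / 2 + bd1 N) + c^2 * (J 0 / 2 + CC + bd2 N)" unfolding i2 ..
      finally have "c^2 * t^2 * A = c^2 * t * (I 0 / 2 + bd1 N) + c^2 * (J 0 / 2 + CC + bd2 N)" .
      then show ?thesis unfolding sT J0 a01 by (simp add: algebra_simps)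
    qed
    have ta: "\<bar>t\<bar> < 1" using t by auto
    obtain Dq where Dq: "\<forall>k. \<forall>x\<in>{-\<bar>t\<bar>..\<bar>t\<bar>}. \<bar>legQ k x\<bar> \<le> Dq*7^k \<and> \<bar>dQ k x\<bar> \<le> Dq*7^k \<and> \<bar>ddQ k x\<bar> \<le> Dq*7^k"
      using legQ_bound[of "\<bar>t\<bar>"] ta by auto
    have tin: "t \<in> {-\<bar>t\<bar>..\<bar>t\<bar>}" by auto
    have qb: "\<forall>k. \<bar>q k\<bar> \<le> Dq*7^k" unfolding q_def using Dq tin by blast
    have Dq0: "Dq \<ge> 0"
    proof -
      have "\<bar>q 0\<bar> \<le> Dq*7^0" using qb by blast
      then have "0 \<le> Dq*7^0" using abs_ge_zero[of "q 0"] by linarith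
      then show ?thesis by simp
    qed
    have b1: "bd1 \<longlonglongrightarrow> 0" unfolding bd1_def by (rule bd_zero[OF Cdec qb C0 Dq0])
    have b2: "bd2 \<longlonglongrightarrow> 0" unfolding bd2_def by (rule bd_zero[OF Jdec qb _ Dq0]) (use C0 in simp)
    have lim2: "(\<lambda>N. - (c^2) * (a 0 * t + a 1 / 3) - (c^2) * (bd2 N + t * bd1 N)) \<longlonglongrightarrow> - (c^2) * (a 0 * t + a 1 / 3) - (c^2) * (0 + t * 0)"
      by (intro tendsto_intros b1 b2)
    have lim3: "(\<lambda>N. \<Sum>k<N. T k) \<longlonglongrightarrow> - (c^2) * (a 0 * t + a 1 / 3)"
    proof -
      have "\<forall>\<^sub>F N in sequentially. - (c^2) * (a 0 * t + a 1 / 3) - (c^2) * (bd2 N + t * bd1 N) = (\<Sum>k<N. T k)"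
        using eventually_ge_at_top[of 1] by eventually_elim (simp add: eq)
      from tendsto_cong[OF this] lim2 show ?thesis by simp
    qed
    from LIMSEQ_unique[OF lim1 lim3]
    show "(1 - t\<^sup>2) * Phi2 t - 2 * t * Phi1 t + (chi n - c\<^sup>2 * t\<^sup>2) * Phi t
             = - c\<^sup>2 * (alpha psi n 0 * t + alpha psi n 1 / 3)"
      by (simp add: ch_def a_def)
  qed
qed


end
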